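(* Let $A\in\mathbb{R}^{n\times n}$ be nonsingular with $\rho(|A^{-1}|)<1/3$. Then for every $b\in\mathbb{R}^n$ and every starting vector $x^0\in\mathbb{R}^n$, the generalized Newton method $x^{k+1}=(A-D(x^k))^{-1}b$ is well defined for all $k\ge 0$ (each $A-D(x^k)$ is nonsingular), and the sequence $\{x^k\}$ converges to the unique solution $x^*$ of $Ax-|x|=b$.
   Context: For a matrix $M=[m_{ij}]$, $|M|=[|m_{ij}|]$ is the entrywise absolute value; for a vector $x$, $|x|$ is the componentwise absolute value. $\rho(\cdot)$ is the spectral radius. $\mathrm{sign}(x)$ is the vector whose components are $1,0,-1$ according as the corresponding component of $x$ is positive, zero, negative, and $D(x)=\mathrm{diag}(\mathrm{sign}(x))$. The generalized Newton method for $Ax-|x|=b$ is the iteration $x^{k+1}=(A-D(x^k))^{-1}b$ from a given $x^0$. *)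

theory Defs
  imports "HOL-Analysis.Analysis"
begin

definition mat_abs :: "real^'n^'m \<Rightarrow> real^'n^'m" where
  "mat_abs M = (\<chi> i j. \<bar>M $ i $ j\<bar>)"

definition vec_abs :: "real^'n \<Rightarrow> real^'n" where
  "vec_abs x = (\<chi> i. \<bar>x $ i\<bar>)"

definition Dsign :: "real^'n \<Rightarrow> real^'n^'n" where
  "Dsign x = (\<chi> i j. if i = j then sgn (x $ i) else 0)"

definition spectral_radius :: "real^'n^'n \<Rightarrow> real" where
  "spectral_radius M =
     Max {cmod z | z. det ((\<chi> i j. (if i = j then z else 0) - complex_of_real (M $ i $ j))
                           :: complex^'n^'n) = 0}"

primrec gen_newton :: "real^'n^'n \<Rightarrow> real^'n \<Rightarrow> real^'n \<Rightarrow> nat \<Rightarrow> real^'n" where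
  "gen_newton A b x0 0 = x0"
| "gen_newton A b x0 (Suc k) = matrix_inv (A - Dsign (gen_newton A b x0 k)) *v b"

end

theory Submission
  imports Defs "HOL-Computational_Algebra.Polynomial"
begin



lemma inv_props:
  fixes M :: "'a::field^'n^'n"
  assumes "invertible M"
  shows "M ** matrix_inv M = mat 1" "matrix_inv M ** M = mat 1"
  using someI_ex[OF assms[unfolded invertible_def]] unfolding matrix_inv_def by auto

lemma ker_invertible:
  fixes M :: "real^'n^'n"
  assumes "\<And>x. M *v x = 0 \<Longrightarrow> x = 0"
  shows "invertible M"
  using assms invertible_left_inverse matrix_left_invertible_ker by blast

lemma det_of_real_mat:
  "det (\<chi> i j. complex_of_real (N$i$j)) = complex_of_real (det (N::real^'n^'n))"
  unfolding det_def by (simp add: of_real_sum of_real_prod)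

lemma Max_attained:
  fixes f :: "'n::finite \<Rightarrow> real"
  obtains i where "\<And>j. f j \<le> f i"
proof -
  have "finite (range f)" "range f \<noteq> {}" by auto
  then have "Max (range f) \<in> range f" by (rule Max_in)
  then obtain i where "f i = Max (range f)" by (metis image_iff)
  moreover have "\<And>j. f j \<le> Max (range f)" by simp
  ultimately show ?thesis using that by metis
qed

lemma large_inj:
  fixes M :: "real^'n^'n"
  defines "z0 \<equiv> 1 + (\<Sum>i\<in>UNIV. \<Sum>j\<in>UNIV. \<bar>M$i$j\<bar>)"
  assumes "(\<chi> i j. (if i = j then z0 else 0) - M$i$j) *v x = 0"
  shows "x = 0"
proof -
  obtain i0 where i0: "\<And>j. \<bar>x$j\<bar> \<le> \<bar>x$i0\<bar>" using Max_attained[of "\<lambda>j. \<bar>x$j\<bar>"] by blast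
  have e1: "(\<Sum>j\<in>UNIV. ((if i0 = j then z0 else 0) - M$i0$j) * x$j) = 0"
    using arg_cong[OF assms(2), of "\<lambda>v. v $ i0"]
    by (simp add: matrix_vector_mult_def)
  have e2: "(\<Sum>j\<in>UNIV. ((if i0 = j then z0 else 0) - M$i0$j) * x$j)
     = (\<Sum>j\<in>UNIV. (if i0 = j then z0 * x$j else 0)) - (\<Sum>j\<in>UNIV. M$i0$j * x$j)"
    by (simp add: left_diff_distrib sum_subtractf if_distrib[where f="\<lambda>a. a * _"] cong: if_cong)
  have eq: "z0 * x$i0 = (\<Sum>j\<in>UNIV. M$i0$j * x$j)"
    using e1 e2 by simp
  have "\<bar>\<Sum>j\<in>UNIV. M$i0$j * x$j\<bar> \<le> (\<Sum>j\<in>UNIV. \<bar>M$i0$j\<bar> * \<bar>x$i0\<bar>)"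
    by (rule order_trans[OF sum_abs]) (simp add: abs_mult mult_left_mono i0 sum_mono)
  also have "\<dots> = (\<Sum>j\<in>UNIV. \<bar>M$i0$j\<bar>) * \<bar>x$i0\<bar>" by (simp add: sum_distrib_right)
  also have "(\<Sum>j\<in>UNIV. \<bar>M$i0$j\<bar>) \<le> (\<Sum>i\<in>UNIV. \<Sum>j\<in>UNIV. \<bar>M$i$j\<bar>)"
    by (rule member_le_sum) (auto intro: sum_nonneg)
  finally have "z0 * \<bar>x$i0\<bar> \<le> (z0 - 1) * \<bar>x$i0\<bar>"
    using eq unfolding z0_def by (simp add: abs_mult mult_right_mono order_trans)
  then have "\<bar>x$i0\<bar> \<le> 0" by (simp add: algebra_simps)
  then show ?thesis using i0 by (metis abs_le_zero_iff order_trans vec_eq_iff zero_index)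
qed


lemma charmat_mult:
  fixes B :: "real^'n^'n"
  shows "(\<chi> i j. (if i = j then c else 0) - B$i$j) *v x = c *s x - B *v x"
proof -
  have "\<And>i. (\<Sum>j\<in>UNIV. ((if i = j then c else 0) - B$i$j) * x$j)
     = (\<Sum>j\<in>UNIV. (if i = j then c * x$j else 0)) - (\<Sum>j\<in>UNIV. B$i$j * x$j)"
    by (simp add: left_diff_distrib sum_subtractf if_distrib[where f="\<lambda>a. a * _"] cong: if_cong)
  then show ?thesis by (simp add: vec_eq_iff matrix_vector_mult_def)
qed

lemma finite_char_roots:
  fixes M :: "real^'n^'n"
  shows "finite {z::complex. det ((\<chi> i j. (if i = j then z else 0) - complex_of_real (M $ i $ j)) :: complex^'n^'n) = 0}"
proof -
  define P where "P = (\<Sum>p\<in>{p. p permutes (UNIV::'n set)}. [:of_int (sign p):] *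
      (\<Prod>i\<in>UNIV. [: - complex_of_real (M$i$(p i)), (if i = p i then 1 else 0) :]))"
  have poly: "\<And>z. poly P z = det ((\<chi> i j. (if i = j then z else 0) - complex_of_real (M $ i $ j)) :: complex^'n^'n)"
    unfolding P_def det_def by (auto simp: poly_sum poly_prod intro!: sum.cong prod.cong)
  define z0 where "z0 = 1 + (\<Sum>i\<in>UNIV. \<Sum>j\<in>UNIV. \<bar>M$i$j\<bar>)"
  define N where "N = (\<chi> i j. (if i = j then z0 else 0) - M$i$j)"
  have "det N \<noteq> 0"
  proof
    assume "det N = 0"
    then have "\<not> invertible N" by (simp add: invertible_det_nz)
    then obtain x where "N *v x = 0" "x \<noteq> 0" using ker_invertible by blast
    then show False using large_inj[of M x] unfolding N_def z0_def by simp
  qed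
  moreover have "((\<chi> i j. (if i = j then complex_of_real z0 else 0) - complex_of_real (M $ i $ j)) :: complex^'n^'n)
      = (\<chi> i j. complex_of_real (N$i$j))"
    unfolding N_def by (simp add: vec_eq_iff)
  ultimately have "poly P (complex_of_real z0) \<noteq> 0" by (simp add: poly det_of_real_mat)
  then have "P \<noteq> 0" by auto
  from poly_roots_finite[OF this] show ?thesis by (simp add: poly)
qed

lemma spec_ge:
  fixes B :: "real^'n^'n"
  assumes "B *v x = l *s x" "x \<noteq> 0" "l \<ge> 0"
  shows "l \<le> spectral_radius B"
proof -
  define N where "N = (\<chi> i j. (if i = j then l else 0) - B$i$j)"
  have "N *v x = 0" unfolding N_def charmat_mult using assms(1) by simp
  then have "\<not> invertible N" using assms(2) inj_matrix_vector_mult[of N]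
    by (metis injD matrix_vector_mult_0_right)
  then have "det N = 0" by (simp add: invertible_det_nz)
  moreover have "((\<chi> i j. (if i = j then complex_of_real l else 0) - complex_of_real (B $ i $ j)) :: complex^'n^'n)
      = (\<chi> i j. complex_of_real (N$i$j))"
    unfolding N_def by (simp add: vec_eq_iff)
  ultimately have "det ((\<chi> i j. (if i = j then complex_of_real l else 0) - complex_of_real (B $ i $ j)) :: complex^'n^'n) = 0"
    by (simp add: det_of_real_mat)
  then have mem: "l \<in> {cmod z | z. det ((\<chi> i j. (if i = j then z else 0) - complex_of_real (B $ i $ j)) :: complex^'n^'n) = 0}"
    using assms(3) by (intro CollectI exI[of _ "complex_of_real l"]) auto
  have fin: "finite {cmod z | z. det ((\<chi> i j. (if i = j then z else 0) - complex_of_real (B $ i $ j)) :: complex^'n^'n) = 0}"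
    using finite_imageI[OF finite_char_roots[of B], of cmod] by (simp add: setcompr_eq_image)
  show ?thesis unfolding spectral_radius_def using Max_ge[OF fin mem] .
qed


definition smplx :: "(real^'n) set" where
  "smplx = {x. (\<forall>i. 0 \<le> x$i) \<and> (\<Sum>i\<in>UNIV. x$i) = 1}"

lemma smplx_le1: "x \<in> smplx \<Longrightarrow> x$i \<le> 1"
proof -
  assume a: "x \<in> smplx"
  have "x$i \<le> (\<Sum>j\<in>UNIV. x$j)" by (rule member_le_sum) (use a in \<open>auto simp: smplx_def\<close>)
  then show ?thesis using a by (simp add: smplx_def)
qed

lemma compact_smplx: "compact (smplx :: (real^'n) set)"
unfolding compact_eq_bounded_closed proof
  show "bounded (smplx :: (real^'n) set)"
    unfolding bounded_iff
  proof (intro exI ballI)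
    fix x :: "real^'n" assume "x \<in> smplx"
    then have "(\<Sum>i\<in>UNIV. \<bar>x $ i\<bar>) = 1" unfolding smplx_def by simp
    then show "norm x \<le> 1" using norm_le_l1_cart[of x] by simp
  qed
  have "smplx = (\<Inter>i. {x::real^'n. 0 \<le> x$i}) \<inter> {x. (\<Sum>i\<in>UNIV. x$i) = 1}"
    unfolding smplx_def by auto
  also have "closed \<dots>"
    by (intro closed_Int closed_INT ballI closed_Collect_le closed_Collect_eq continuous_intros)
  finally show "closed (smplx :: (real^'n) set)" .
qed

lemma convex_smplx: "convex (smplx :: (real^'n) set)"
  unfolding convex_def smplx_def
  by (auto simp: sum.distrib sum_distrib_left[symmetric])

lemma nonempty_smplx: "(smplx :: (real^'n) set) \<noteq> {}"
proof -
  obtain i0 :: 'n where True by simp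
  have "axis i0 1 \<in> smplx" unfolding smplx_def axis_def by (auto simp: sum.delta)
  then show ?thesis by auto
qed


lemma Bx_nonneg:
  fixes B :: "real^'n^'n"
  assumes "\<And>i j. B$i$j \<ge> 0" "\<And>i. x$i \<ge> 0"
  shows "(B *v x)$i \<ge> 0"
  using assms by (simp add: matrix_vector_mult_def sum_nonneg)

lemma brouwer_step:
  fixes B :: "real^'n^'n"
  assumes nn: "\<And>i j. B$i$j \<ge> 0" and e: "0 < e" "e \<le> 1"
    and H: "\<And>v. (\<forall>i. v$i > 0) \<Longrightarrow> \<exists>i. (B *v v)$i > r * v$i"
  shows "\<exists>x l. x \<in> smplx \<and> r < l \<and> l \<le> (\<Sum>i\<in>UNIV. \<Sum>j\<in>UNIV. B$i$j) + real CARD('n)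
           \<and> B *v x + e *\<^sub>R (\<chi> i. 1) = l *\<^sub>R x"
proof -
  define c :: "real^'n" where "c = (\<chi> i. 1)"
  define \<sigma> where "\<sigma> x = (\<Sum>i\<in>UNIV. (B *v x + e *\<^sub>R c)$i)" for x
  define g where "g x = inverse (\<sigma> x) *\<^sub>R (B *v x + e *\<^sub>R c)" for x
  have comp_pos: "(B *v x + e *\<^sub>R c)$i \<ge> e" if "x \<in> smplx" for x i
    using Bx_nonneg[OF nn, of x i] that by (simp add: smplx_def c_def)
  have spos: "\<sigma> x > 0" if "x \<in> smplx" for x
    unfolding \<sigma>_def using comp_pos[OF that] e by (intro sum_pos) (auto intro: less_le_trans)
  have mc: "continuous_on smplx ((*v) B)"
    by (rule linear_continuous_on) simp
  have cs: "continuous_on smplx \<sigma>"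
    unfolding \<sigma>_def by (intro continuous_intros mc)
  have ci: "continuous_on smplx (\<lambda>x. inverse (\<sigma> x))"
    by (rule continuous_on_inverse[OF cs]) (use spos in \<open>force\<close>)
  have cont: "continuous_on smplx g"
  proof -
    have cv: "continuous_on smplx (\<lambda>x. B *v x + e *\<^sub>R c)"
      by (rule continuous_on_add[OF mc continuous_on_const])
    show ?thesis unfolding g_def by (rule continuous_on_scaleR[OF ci cv])
  qed
  have maps: "g \<in> smplx \<rightarrow> smplx"
  proof
    fix x :: "real^'n" assume x: "x \<in> smplx"
    have "\<forall>i. 0 \<le> g x $ i"
    proof
      fix i
      have "0 \<le> (B *v x + e *\<^sub>R c)$i" using comp_pos[OF x, of i] e by linarith
      then show "0 \<le> g x $ i" unfolding g_def using spos[OF x] by simp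
    qed
    moreover have "(\<Sum>i\<in>UNIV. g x $ i) = 1" unfolding g_def
      using spos[OF x] by (simp add: sum_distrib_left[symmetric] \<sigma>_def)
    ultimately show "g x \<in> smplx" unfolding smplx_def by simp
  qed
  obtain x where x: "x \<in> smplx" "g x = x"
    using brouwer[OF compact_smplx convex_smplx nonempty_smplx cont maps] by blast
  define l where "l = \<sigma> x"
  have lpos: "l > 0" using spos[OF x(1)] l_def by simp
  have eq: "B *v x + e *\<^sub>R c = l *\<^sub>R x"
  proof -
    have "l *\<^sub>R x = l *\<^sub>R (inverse l *\<^sub>R (B *v x + e *\<^sub>R c))"
      using x(2) unfolding g_def l_def by simp
    also have "\<dots> = B *v x + e *\<^sub>R c" using lpos by simp
    finally show ?thesis by simp
  qed
  have xpos: "x$i > 0" for i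
  proof -
    have "l * x$i = (B *v x + e *\<^sub>R c)$i" using arg_cong[OF eq, of "\<lambda>v. v$i"] by simp
    then have "0 < l * x$i" using comp_pos[OF x(1), of i] e by linarith
    then show ?thesis using lpos zero_less_mult_pos by blast
  qed
  obtain i where i: "(B *v x)$i > r * x$i" using H[of x] xpos by blast
  have "(B *v x)$i + e = l * x$i" using arg_cong[OF eq, of "\<lambda>v. v$i"] by (simp add: c_def)
  then have "r * x$i < l * x$i" using i e by linarith
  then have rl: "r < l" using xpos[of i] by simp
  have "l = (\<Sum>i\<in>UNIV. (B *v x)$i) + e * real CARD('n)"
    unfolding l_def \<sigma>_def by (simp add: sum.distrib c_def)
  also have "(\<Sum>i\<in>UNIV. (B *v x)$i) \<le> (\<Sum>i\<in>UNIV. \<Sum>j\<in>UNIV. B$i$j)"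
    unfolding matrix_vector_mult_def using smplx_le1[OF x(1)] nn
    by (auto intro!: sum_mono mult_left_le)
  also have "e * real CARD('n) \<le> real CARD('n)" using e by simp
  finally have "l \<le> (\<Sum>i\<in>UNIV. \<Sum>j\<in>UNIV. B$i$j) + real CARD('n)" by simp
  then show ?thesis using x(1) rl eq unfolding c_def by blast
qed


lemma pos_vec:
  fixes B :: "real^'n^'n"
  assumes nn: "\<And>i j. B$i$j \<ge> 0" and r: "0 < r" "spectral_radius B < r"
  shows "\<exists>v. (\<forall>i. v$i > 0) \<and> (\<forall>i. (B *v v)$i \<le> r * v$i)"
proof (rule ccontr)
  assume nex: "\<not> ?thesis"
  have H: "\<And>v. (\<forall>i. v$i > 0) \<Longrightarrow> \<exists>i. (B *v v)$i > r * v$i" using nex by (meson not_le)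
  define L where "L = (\<Sum>i\<in>UNIV. \<Sum>j\<in>UNIV. B$i$j) + real CARD('n)"
  define e where "e k = inverse (real (Suc k))" for k :: nat
  define one :: "real^'n" where "one = (\<chi> i. 1)"
  have "\<forall>k. \<exists>p. fst p \<in> smplx \<and> r < snd p \<and> snd p \<le> L \<and> B *v fst p + e k *\<^sub>R one = snd p *\<^sub>R fst p"
  proof
    fix k
    have "0 < e k" "e k \<le> 1" unfolding e_def by (auto simp: field_simps)
    from brouwer_step[OF nn this H] show "\<exists>p. fst p \<in> smplx \<and> r < snd p \<and> snd p \<le> L \<and> B *v fst p + e k *\<^sub>R one = snd p *\<^sub>R fst p"
      unfolding L_def one_def by auto
  qed
  then obtain f where f: "\<And>k. fst (f k) \<in> smplx \<and> r < snd (f k) \<and> snd (f k) \<le> L \<and> B *v fst (f k) + e k *\<^sub>R one = snd (f k) *\<^sub>R fst (f k)"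
    by metis
  define K :: "((real^'n) \<times> real) set" where "K = smplx \<times> {r..L}"
  have cK: "compact K" unfolding K_def by (intro compact_Times compact_smplx compact_Icc)
  have fK: "\<forall>k. f k \<in> K" using f unfolding K_def by (auto simp: mem_Times_iff less_imp_le)
  obtain p \<sigma> where p: "p \<in> K" "strict_mono \<sigma>" "(f \<circ> \<sigma>) \<longlonglongrightarrow> p"
    using seq_compactE[OF compact_imp_seq_compact[OF cK] fK] by metis
  define h where "h q = B *v fst q - snd q *\<^sub>R fst q" for q :: "(real^'n) \<times> real"
  have h1: "(\<lambda>k. h (f (\<sigma> k))) \<longlonglongrightarrow> h p"
  proof -
    have t: "(\<lambda>k. f (\<sigma> k)) \<longlonglongrightarrow> p" using p(3) by (simp add: comp_def)
    show ?thesis unfolding h_def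
      by (intro tendsto_diff tendsto_scaleR tendsto_fst tendsto_snd t
            bounded_linear.tendsto[OF matrix_vector_mul_bounded_linear])
  qed
  have h2: "h (f (\<sigma> k)) = (- e (\<sigma> k)) *\<^sub>R one" for k
    using f[of "\<sigma> k"] unfolding h_def by (simp add: algebra_simps eq_diff_eq)
  have "(\<lambda>k. e (\<sigma> k)) \<longlonglongrightarrow> 0"
    using LIMSEQ_subseq_LIMSEQ[OF LIMSEQ_inverse_real_of_nat p(2)] unfolding e_def by (simp add: comp_def)
  then have "(\<lambda>k. (- e (\<sigma> k)) *\<^sub>R one) \<longlonglongrightarrow> (- 0) *\<^sub>R one"
    by (intro tendsto_scaleR tendsto_minus tendsto_const)
  then have "h p = 0" using h1 h2 LIMSEQ_unique by fastforce
  then have eig: "B *v fst p = snd p *s fst p" unfolding h_def by (simp add: scalar_mult_eq_scaleR)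
  have "fst p \<noteq> 0" using p(1) unfolding K_def smplx_def by auto
  moreover have "snd p \<ge> r" using p(1) unfolding K_def by auto
  ultimately show False using spec_ge[OF eig] r by linarith
qed

lemma Dsign_mult: "(Dsign w *v y)$i = sgn (w$i) * y$i"
proof -
  have "(\<Sum>j\<in>UNIV. (if i = j then sgn (w$i) else 0) * y$j) = (\<Sum>j\<in>UNIV. if i = j then sgn (w$i) * y$j else 0)"
    by (rule sum.cong) auto
  then show ?thesis by (simp add: Dsign_def matrix_vector_mult_def)
qed

lemma Dsign_self: "Dsign w *v w = vec_abs w"
  by (simp add: vec_eq_iff Dsign_mult vec_abs_def sgn_mult_abs abs_sgn)

lemma mat_vec_bound:
  fixes M :: "real^'n^'m"
  shows "\<bar>(M *v y)$i\<bar> \<le> (\<Sum>j\<in>UNIV. \<bar>M$i$j\<bar> * \<bar>y$j\<bar>)"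
  unfolding matrix_vector_mult_def by (simp add: order_trans[OF sum_abs] abs_mult)

lemma sgn_ineq: "\<bar>sgn (a::real) * c - sgn a' * a\<bar> \<le> \<bar>c - a\<bar> + 2 * \<bar>a - a'\<bar>"
  by (auto simp: sgn_if abs_if)

lemma contract:
  fixes B :: "real^'n^'n"
  assumes nn: "\<And>i j. B$i$j \<ge> 0" and vpos: "\<And>i. v$i > 0" and Bv: "\<And>i. (B *v v)$i \<le> r * v$i"
    and r: "0 \<le> r" "r < 1"
    and hx: "\<And>i. \<bar>x$i\<bar> \<le> (\<Sum>j\<in>UNIV. B$i$j * (\<bar>x$j\<bar> + 2 * \<bar>y$j\<bar>))"
    and hy: "\<And>j. \<bar>y$j\<bar> \<le> t * v$j"
  shows "\<bar>x$i\<bar> \<le> (2 * r / (1 - r)) * t * v$i"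
proof -
  obtain i0 where i0: "\<And>j. \<bar>x$j\<bar> / v$j \<le> \<bar>x$i0\<bar> / v$i0"
    using Max_attained[of "\<lambda>j. \<bar>x$j\<bar> / v$j"] by blast
  define s where "s = \<bar>x$i0\<bar> / v$i0"
  have xs: "\<bar>x$j\<bar> \<le> s * v$j" for j using i0[of j] vpos[of j] unfolding s_def by (simp add: field_simps)
  have t0: "t \<ge> 0" using hy[of i0] vpos[of i0] by (metis abs_ge_zero order_trans zero_le_mult_iff not_less)
  have s0: "s \<ge> 0" unfolding s_def using vpos[of i0] by simp
  have bnd: "\<bar>x$i\<bar> \<le> (s + 2 * t) * r * v$i" for i
  proof -
    have "\<bar>x$i\<bar> \<le> (\<Sum>j\<in>UNIV. B$i$j * ((s + 2 * t) * v$j))"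
    proof (rule order_trans[OF hx[of i]], intro sum_mono mult_left_mono nn)
      fix j
      show "\<bar>x$j\<bar> + 2 * \<bar>y$j\<bar> \<le> (s + 2 * t) * v$j" using xs[of j] hy[of j] by (simp add: algebra_simps)
    qed
    also have "\<dots> = (s + 2 * t) * (B *v v)$i"
      by (simp add: matrix_vector_mult_def sum_distrib_left algebra_simps)
    also have "\<dots> \<le> (s + 2 * t) * (r * v$i)" using Bv[of i] s0 t0 by (intro mult_left_mono) auto
    finally show ?thesis by (simp add: algebra_simps)
  qed
  have "s * v$i0 \<le> (s + 2 * t) * r * v$i0" using bnd[of i0] vpos[of i0] unfolding s_def by simp
  then have "s \<le> (s + 2 * t) * r" using vpos[of i0] by simp
  then have "s * (1 - r) \<le> 2 * r * t" by (simp add: algebra_simps)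
  then have sq: "s \<le> (2 * r / (1 - r)) * t" using r by (simp add: field_simps)
  show ?thesis using xs[of i] sq vpos[of i] by (meson order_trans mult_right_mono less_imp_le)
qed


lemma sgn_abs_le: "\<bar>sgn (a::real) * c\<bar> \<le> \<bar>c\<bar>"
  by (auto simp: sgn_if)

lemma tendsto_vec_abs:
  assumes "(X \<longlongrightarrow> a) F"
  shows "((\<lambda>k. vec_abs (X k)) \<longlongrightarrow> vec_abs a) F"
  unfolding vec_abs_def by (intro vec_tendstoI) (auto intro!: tendsto_rabs tendsto_vec_nth assms)

theorem theorem3p7:
  fixes A :: "real^'n^'n"
  assumes "invertible A"
    and "spectral_radius (mat_abs (matrix_inv A)) < 1/3"
  shows "\<forall>(b :: real^'n) (x0 :: real^'n).
           (\<forall>k. invertible (A - Dsign (gen_newton A b x0 k))) \<and>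
           (\<exists>xs. (\<forall>y. A *v y - vec_abs y = b \<longleftrightarrow> y = xs) \<and>
                 gen_newton A b x0 \<longlonglongrightarrow> xs)"
proof (intro allI)
  fix b x0 :: "real^'n"
  define Ai where "Ai = matrix_inv A"
  define B where "B = mat_abs Ai"
  have Bij: "B$i$j = \<bar>Ai$i$j\<bar>" for i j by (simp add: B_def mat_abs_def)
  have nn: "\<And>i j. 0 \<le> B$i$j" by (simp add: Bij)
  have AAi: "A *v (Ai *v y) = y" "Ai *v (A *v y) = y" for y
    using inv_props[OF assms(1)] by (simp_all add: Ai_def matrix_vector_mul_assoc)
  define \<rho> where "\<rho> = spectral_radius B"
  define r where "r = (max \<rho> 0 + 1/3)/2"
  have r: "0 < r" "r < 1/3" "\<rho> < r" using assms(2) unfolding r_def \<rho>_def B_def Ai_def by (auto simp: max_def)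
  obtain v where vpos: "\<And>i. v$i > 0" and Bv: "\<And>i. (B *v v)$i \<le> r * v$i"
    using pos_vec[OF nn r(1)] r(3) unfolding \<rho>_def by blast
  define q where "q = 2*r/(1-r)"
  have q: "0 \<le> q" "q < 1" using r unfolding q_def by (auto simp: field_simps)
  have Ctr: "\<bar>z$i\<bar> \<le> q*t * v$i"
    if "\<And>i. \<bar>z$i\<bar> \<le> (\<Sum>j\<in>UNIV. B$i$j * (\<bar>z$j\<bar> + 2 * \<bar>y$j\<bar>))" "\<And>j. \<bar>y$j\<bar> \<le> t * v$j" for z y t i
    using contract[OF nn vpos Bv _ _ that, of i] r unfolding q_def by auto
  have Aib: "\<bar>(Ai *v y)$i\<bar> \<le> (\<Sum>j\<in>UNIV. B$i$j * \<bar>y$j\<bar>)" for y i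
    using mat_vec_bound[of Ai y i] by (simp add: Bij)
  have zero: "z = 0" if hz: "\<And>i. \<bar>z$i\<bar> \<le> (\<Sum>j\<in>UNIV. B$i$j * \<bar>z$j\<bar>)" for z
  proof -
    have "\<bar>z$i\<bar> \<le> q*0 * v$i" for i by (rule Ctr[where y=0]) (use hz in auto)
    then show "z = 0" by (simp add: vec_eq_iff)
  qed
  have invD: "invertible (A - Dsign w)" for w
  proof (rule ker_invertible)
    fix z assume "(A - Dsign w) *v z = 0"
    then have "A *v z = Dsign w *v z" by (simp add: matrix_vector_mult_diff_rdistrib)
    then have zz: "z = Ai *v (Dsign w *v z)" using AAi(2)[of z] by simp
    have "\<bar>z$i\<bar> \<le> (\<Sum>j\<in>UNIV. B$i$j * \<bar>z$j\<bar>)" for i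
    proof -
      have "\<bar>z$i\<bar> \<le> (\<Sum>j\<in>UNIV. B$i$j * \<bar>(Dsign w *v z)$j\<bar>)" using Aib[of "Dsign w *v z" i] zz by simp
      also have "\<dots> \<le> (\<Sum>j\<in>UNIV. B$i$j * \<bar>z$j\<bar>)"
        by (intro sum_mono mult_left_mono nn) (simp add: Dsign_mult sgn_abs_le)
      finally show ?thesis .
    qed
    then show "z = 0" by (rule zero)
  qed
  define x where "x = gen_newton A b x0"
  have step: "A *v x (Suc k) = b + Dsign (x k) *v x (Suc k)" for k
  proof -
    have "(A - Dsign (x k)) *v x (Suc k) = b" unfolding x_def
      using inv_props(1)[OF invD[of "gen_newton A b x0 k"]] by (simp add: matrix_vector_mul_assoc)
    then have "A *v x (Suc k) - Dsign (x k) *v x (Suc k) = b" by (simp add: matrix_vector_mult_diff_rdistrib)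
    then show ?thesis by (metis diff_add_cancel add.commute)
  qed
  define d where "d k = x (Suc k) - x k" for k
  have dstep: "d (Suc k) = Ai *v (Dsign (x (Suc k)) *v x (Suc (Suc k)) - Dsign (x k) *v x (Suc k))" for k
  proof -
    have "A *v d (Suc k) = Dsign (x (Suc k)) *v x (Suc (Suc k)) - Dsign (x k) *v x (Suc k)"
      unfolding d_def matrix_vector_mult_diff_distrib step by simp
    then show ?thesis using AAi(2)[of "d (Suc k)"] by simp
  qed
  have dbound: "\<bar>d (Suc k) $ i\<bar> \<le> (\<Sum>j\<in>UNIV. B$i$j * (\<bar>d (Suc k) $ j\<bar> + 2 * \<bar>d k $ j\<bar>))" for k i
  proof -
    have "\<bar>d (Suc k) $ i\<bar> \<le> (\<Sum>j\<in>UNIV. B$i$j * \<bar>(Dsign (x (Suc k)) *v x (Suc (Suc k)) - Dsign (x k) *v x (Suc k))$j\<bar>)"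
      unfolding dstep by (rule Aib)
    also have "\<dots> \<le> (\<Sum>j\<in>UNIV. B$i$j * (\<bar>d (Suc k) $ j\<bar> + 2 * \<bar>d k $ j\<bar>))"
      by (intro sum_mono mult_left_mono nn) (simp add: Dsign_mult d_def sgn_ineq)
    finally show ?thesis .
  qed
  obtain i0 where i0: "\<And>j. \<bar>d 0 $ j\<bar> / v$j \<le> \<bar>d 0 $ i0\<bar> / v$i0"
    using Max_attained[of "\<lambda>j. \<bar>d 0 $ j\<bar> / v$j"] by blast
  define t0 where "t0 = \<bar>d 0 $ i0\<bar> / v$i0"
  have t0: "t0 \<ge> 0" unfolding t0_def using vpos[of i0] by simp
  have dk: "\<bar>d k $ j\<bar> \<le> q^k * t0 * v$j" for k j
  proof (induction k arbitrary: j)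
    case 0
    then show ?case using i0[of j] vpos[of j] unfolding t0_def by (simp add: field_simps)
  next
    case (Suc k)
    have "\<bar>d (Suc k) $ j\<bar> \<le> q * (q^k * t0) * v$j"
      by (rule Ctr[OF dbound]) (use Suc.IH in \<open>simp add: mult.assoc\<close>)
    then show ?case by (simp add: mult.assoc)
  qed
  define V where "V = (\<Sum>i\<in>UNIV. v$i)"
  have nd: "norm (d k) \<le> q^k * (t0 * V)" for k
  proof -
    have "norm (d k) \<le> (\<Sum>i\<in>UNIV. \<bar>d k $ i\<bar>)" by (rule norm_le_l1_cart)
    also have "\<dots> \<le> (\<Sum>i\<in>UNIV. q^k * t0 * v$i)" by (intro sum_mono dk)
    also have "\<dots> = q^k * (t0 * V)" by (simp add: V_def sum_distrib_left mult.assoc)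
    finally show ?thesis .
  qed
  have sg: "summable (\<lambda>k. q^k * (t0 * V))"
    by (rule summable_mult2, rule summable_geometric) (use q in simp)
  have sd: "summable d" by (rule summable_comparison_test'[OF sg nd])
  have xsum: "x k = x0 + (\<Sum>i<k. d i)" for k
    by (induction k) (simp_all add: x_def d_def)
  define xs where "xs = x0 + suminf d"
  have conv: "x \<longlonglongrightarrow> xs"
  proof -
    have "(\<lambda>k. x0 + (\<Sum>i<k. d i)) \<longlonglongrightarrow> x0 + suminf d"
      by (intro tendsto_add tendsto_const summable_LIMSEQ sd)
    moreover have "x = (\<lambda>k. x0 + (\<Sum>i<k. d i))" by (rule ext) (rule xsum)
    ultimately show ?thesis unfolding xs_def by simp
  qed
  have dlim: "d \<longlonglongrightarrow> 0" by (rule summable_LIMSEQ_zero[OF sd])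
  have eqk: "A *v x (Suc k) - vec_abs (x k) - Dsign (x k) *v d k = b" for k
    using step[of k] by (simp add: d_def matrix_vector_mult_diff_distrib Dsign_self)
  have L1: "(\<lambda>k. A *v x (Suc k)) \<longlonglongrightarrow> A *v xs"
    by (rule bounded_linear.tendsto[OF matrix_vector_mul_bounded_linear LIMSEQ_Suc[OF conv]])
  have L2: "(\<lambda>k. vec_abs (x k)) \<longlonglongrightarrow> vec_abs xs" by (rule tendsto_vec_abs[OF conv])
  have L3: "(\<lambda>k. Dsign (x k) *v d k) \<longlonglongrightarrow> 0"
  proof (rule Lim_null_comparison)
    show "\<forall>\<^sub>F k in sequentially. norm (Dsign (x k) *v d k) \<le> norm (d k)"
      by (intro always_eventually allI norm_le_componentwise_cart) (simp add: Dsign_mult sgn_abs_le)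
    show "(\<lambda>k. norm (d k)) \<longlonglongrightarrow> 0" using dlim by (rule tendsto_norm_zero)
  qed
  have "(\<lambda>k. A *v x (Suc k) - vec_abs (x k) - Dsign (x k) *v d k) \<longlonglongrightarrow> A *v xs - vec_abs xs - 0"
    by (intro tendsto_diff L1 L2 L3)
  then have sol: "A *v xs - vec_abs xs = b" using eqk LIMSEQ_unique[OF _ tendsto_const] by force
  have uniq: "y = xs" if hy: "A *v y - vec_abs y = b" for y
  proof -
    define z where "z = y - xs"
    have "A *v z = vec_abs y - vec_abs xs" using hy sol unfolding z_def
      by (simp add: matrix_vector_mult_diff_distrib algebra_simps)
    then have zz: "z = Ai *v (vec_abs y - vec_abs xs)" using AAi(2)[of z] by simp
    have "\<bar>z$i\<bar> \<le> (\<Sum>j\<in>UNIV. B$i$j * \<bar>z$j\<bar>)" for i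
    proof -
      have "\<bar>z$i\<bar> \<le> (\<Sum>j\<in>UNIV. B$i$j * \<bar>(vec_abs y - vec_abs xs)$j\<bar>)" using Aib[of _ i] zz by metis
      also have "\<dots> \<le> (\<Sum>j\<in>UNIV. B$i$j * \<bar>z$j\<bar>)"
        by (intro sum_mono mult_left_mono nn) (simp add: vec_abs_def z_def abs_triangle_ineq3)
      finally show ?thesis .
    qed
    then have "z = 0" by (rule zero)
    then show ?thesis unfolding z_def by simp
  qed
  show "(\<forall>k. invertible (A - Dsign (gen_newton A b x0 k))) \<and>
           (\<exists>xs. (\<forall>y. A *v y - vec_abs y = b \<longleftrightarrow> y = xs) \<and> gen_newton A b x0 \<longlonglongrightarrow> xs)"
    using invD sol uniq conv unfolding x_def by blast
qed

end
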